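(* Let jobs $1,\dots,m$ form a feasible set, and let $r\le d$ be times with $r_j\ge r$ and $d_j\le d$ for all $j$. Let $\alpha\ge 1$ and let $\alpha$-DLY be any scheduling policy that, at every time $t$, only runs work of a job $j$ whose current stretch $(t-r_j)/(d_j-r_j)$ is at least $\alpha$. Then the total amount of time during which $\alpha$-DLY runs these jobs (until all are completed) is at most $(d-r)/\alpha$.
   Context: Jobs $j$ have release time $r_j$, due date $d_j>r_j$, work $w_j>0$, and linear speed function $f_j(t)=m_j(t-r_j)$ with $m_j>0$. A single processor runs at most one job at a time, preemption is allowed, and running job $j$ during a set of times $S$ completes $\int_S f_j(t)\,dt$ units of its work. A set of jobs is feasible if some schedule runs each job only within $[r_j,d_j]$ and completes it by $d_j$. *)

theory Defs
  imports "HOL-Analysis.Analysis"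
begin

text \<open>Jobs are indexed by natural numbers; job j has release time rr j, due date dd j,
  work w j and speed slope mm j.
  A schedule assigns to each job a Lebesgue-measurable set of times; the sets of
  distinct jobs are pairwise disjoint (single processor, preemption allowed).\<close>

definition speed :: "(nat \<Rightarrow> real) \<Rightarrow> (nat \<Rightarrow> real) \<Rightarrow> nat \<Rightarrow> real \<Rightarrow> real" where
  "speed mm rr j t = mm j * (t - rr j)"

definition work_done :: "(nat \<Rightarrow> real) \<Rightarrow> (nat \<Rightarrow> real) \<Rightarrow> nat \<Rightarrow> real set \<Rightarrow> ennreal" where
  "work_done mm rr j S = (\<integral>\<^sup>+ t\<in>S. ennreal (speed mm rr j t) \<partial>lborel)"

definition feasible ::
  "nat set \<Rightarrow> (nat \<Rightarrow> real) \<Rightarrow> (nat \<Rightarrow> real) \<Rightarrow> (nat \<Rightarrow> real) \<Rightarrow> (nat \<Rightarrow> real) \<Rightarrow> bool" where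
  "feasible J rr dd w mm \<longleftrightarrow>
     (\<exists>S :: nat \<Rightarrow> real set.
        disjoint_family_on S J \<and>
        (\<forall>j\<in>J. S j \<in> sets lborel \<and> S j \<subseteq> {rr j .. dd j} \<and>
                ennreal (w j) \<le> work_done mm rr j (S j)))"

definition stretch :: "(nat \<Rightarrow> real) \<Rightarrow> (nat \<Rightarrow> real) \<Rightarrow> nat \<Rightarrow> real \<Rightarrow> real" where
  "stretch rr dd j t = (t - rr j) / (dd j - rr j)"

definition dly_schedule ::
  "real \<Rightarrow> nat set \<Rightarrow> (nat \<Rightarrow> real) \<Rightarrow> (nat \<Rightarrow> real) \<Rightarrow> (nat \<Rightarrow> real) \<Rightarrow> (nat \<Rightarrow> real)
     \<Rightarrow> (nat \<Rightarrow> real set) \<Rightarrow> bool" where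
  "dly_schedule \<alpha> J rr dd w mm T \<longleftrightarrow>
     disjoint_family_on T J \<and>
     (\<forall>j\<in>J. T j \<in> sets lborel \<and>
             (\<forall>t\<in>T j. stretch rr dd j t \<ge> \<alpha>) \<and>
             work_done mm rr j (T j) = ennreal (w j))"

end

theory Submission
  imports Defs
begin

lemma job_bound:
  fixes a c L :: real and S T :: "real set"
  assumes mpos: "mj > 0" and L: "rj < dj" and a: "a \<ge> 1"
    and Sm: "S \<in> sets lborel" and Ssub: "S \<subseteq> {rj..dj}"
    and Tm: "T \<in> sets lborel" and Tst: "\<forall>t\<in>T. (t - rj) / (dj - rj) \<ge> a"
    and wS: "ennreal wj \<le> (\<integral>\<^sup>+ t\<in>S. ennreal (mj * (t - rj)) \<partial>lborel)"
    and wT: "(\<integral>\<^sup>+ t\<in>T. ennreal (mj * (t - rj)) \<partial>lborel) = ennreal wj"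
  shows "emeasure lborel T \<le> ennreal (1/a) * emeasure lborel S"
proof -
  define c where "c = mj * (dj - rj)"
  have cpos: "c > 0" using mpos L by (simp add: c_def)
  have A: "ennreal (c * a) * emeasure lborel T \<le> ennreal wj"
  proof -
    have "ennreal (c * a) * emeasure lborel T = (\<integral>\<^sup>+ t. ennreal (c*a) * indicator T t \<partial>lborel)"
      using Tm by (simp add: nn_integral_cmult_indicator)
    also have "\<dots> \<le> (\<integral>\<^sup>+ t\<in>T. ennreal (mj * (t - rj)) \<partial>lborel)"
    proof (rule nn_integral_mono)
      fix t show "ennreal (c*a) * indicator T t \<le> ennreal (mj * (t - rj)) * indicator T t"
      proof (cases "t \<in> T")
        case True
        then have "(t - rj) / (dj - rj) \<ge> a" using Tst by auto
        then have "t - rj \<ge> a * (dj - rj)" using L by (simp add: pos_le_divide_eq)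
        then have "mj * (t - rj) \<ge> c * a" using mpos unfolding c_def
          by (metis mult.assoc mult.commute mult_left_mono less_imp_le)
        then show ?thesis using True by (simp add: ennreal_leI)
      qed simp
    qed
    finally show ?thesis using wT by simp
  qed
  have B: "ennreal wj \<le> ennreal c * emeasure lborel S"
  proof -
    have "(\<integral>\<^sup>+ t\<in>S. ennreal (mj * (t - rj)) \<partial>lborel) \<le> (\<integral>\<^sup>+ t. ennreal c * indicator S t \<partial>lborel)"
    proof (rule nn_integral_mono)
      fix t show "ennreal (mj * (t - rj)) * indicator S t \<le> ennreal c * indicator S t"
      proof (cases "t \<in> S")
        case True
        then have "t \<le> dj" using Ssub by auto
        then have "mj * (t - rj) \<le> c" using mpos unfolding c_def
          by (intro mult_left_mono) auto
        then show ?thesis using True by (simp add: ennreal_leI)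
      qed simp
    qed
    also have "\<dots> = ennreal c * emeasure lborel S"
      using Sm by (simp add: nn_integral_cmult_indicator)
    finally show ?thesis using wS by simp
  qed
  have C: "ennreal c * (ennreal a * emeasure lborel T) \<le> ennreal c * emeasure lborel S"
    using A B cpos a by (simp add: ennreal_mult mult.assoc)
  have "ennreal (1/c) * (ennreal c * (ennreal a * emeasure lborel T)) \<le> ennreal (1/c) * (ennreal c * emeasure lborel S)"
    using C by (rule mult_left_mono) simp
  then have D: "ennreal a * emeasure lborel T \<le> emeasure lborel S"
    using cpos by (simp add: mult.assoc[symmetric] ennreal_mult[symmetric])
  have "emeasure lborel T = ennreal (1/a) * (ennreal a * emeasure lborel T)"
    using a by (simp add: mult.assoc[symmetric] ennreal_mult[symmetric])
  also have "\<dots> \<le> ennreal (1/a) * emeasure lborel S"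
    using D by (rule mult_left_mono) simp
  finally show ?thesis .
qed

theorem mainTheorem6:
  fixes m :: nat and rr dd w mm :: "nat \<Rightarrow> real" and r d \<alpha> :: real
    and T :: "nat \<Rightarrow> real set"
  assumes jobs: "\<And>j. j \<in> {1..m} \<Longrightarrow> rr j < dd j \<and> w j > 0 \<and> mm j > 0"
    and feas: "feasible {1..m} rr dd w mm"
    and rd: "r \<le> d"
    and rel: "\<And>j. j \<in> {1..m} \<Longrightarrow> r \<le> rr j"
    and due: "\<And>j. j \<in> {1..m} \<Longrightarrow> dd j \<le> d"
    and alpha: "\<alpha> \<ge> 1"
    and dly: "dly_schedule \<alpha> {1..m} rr dd w mm T"
  shows "emeasure lborel (\<Union>j\<in>{1..m}. T j) \<le> ennreal ((d - r) / \<alpha>)"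
proof -
  obtain S where Sdis: "disjoint_family_on S {1..m}" and
    Sj: "\<And>j. j\<in>{1..m} \<Longrightarrow> S j \<in> sets lborel \<and> S j \<subseteq> {rr j .. dd j} \<and>
                ennreal (w j) \<le> work_done mm rr j (S j)"
    using feas unfolding feasible_def by blast
  have Tj: "\<And>j. j\<in>{1..m} \<Longrightarrow> T j \<in> sets lborel \<and>
             (\<forall>t\<in>T j. stretch rr dd j t \<ge> \<alpha>) \<and>
             work_done mm rr j (T j) = ennreal (w j)"
    using dly unfolding dly_schedule_def by blast
  have each: "emeasure lborel (T j) \<le> ennreal (1/\<alpha>) * emeasure lborel (S j)" if j: "j \<in> {1..m}" for j
    using j jobs[OF j] Sj[OF j] Tj[OF j] alpha
    by (intro job_bound[where mj="mm j" and rj="rr j" and dj="dd j" and wj="w j"])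
       (auto simp: work_done_def speed_def stretch_def)
  have "emeasure lborel (\<Union>j\<in>{1..m}. T j) \<le> (\<Sum>j\<in>{1..m}. emeasure lborel (T j))"
    using Tj by (intro emeasure_subadditive_finite) auto
  also have "\<dots> \<le> (\<Sum>j\<in>{1..m}. ennreal (1/\<alpha>) * emeasure lborel (S j))"
    using each by (intro sum_mono) auto
  also have "\<dots> = ennreal (1/\<alpha>) * (\<Sum>j\<in>{1..m}. emeasure lborel (S j))"
    by (simp add: sum_distrib_left)
  also have "(\<Sum>j\<in>{1..m}. emeasure lborel (S j)) = emeasure lborel (\<Union>j\<in>{1..m}. S j)"
    using Sj Sdis by (intro sum_emeasure) auto
  also have "emeasure lborel (\<Union>j\<in>{1..m}. S j) \<le> emeasure lborel {r..d}"
  proof (rule emeasure_mono)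
    show "(\<Union>j\<in>{1..m}. S j) \<subseteq> {r..d}" using Sj rel due by fastforce
  qed simp
  also have "emeasure lborel {r..d} = ennreal (d - r)" using rd by simp
  finally have "emeasure lborel (\<Union>j\<in>{1..m}. T j) \<le> ennreal (1/\<alpha>) * ennreal (d - r)"
    by (simp add: mult_left_mono)
  also have "\<dots> = ennreal ((d - r) / \<alpha>)"
    using alpha rd by (subst ennreal_mult[symmetric]) auto
  finally show ?thesis .
qed

end
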